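(* Let $G$ be a twin-free simple graph on vertex set $\{1,\dots,n\}$, and suppose that for some $1\le m\le n$ the set $\{1,2,\dots,m\}$ is a minimal identifying code of $G$ (i.e. an identifying code no proper subset of which is an identifying code). Then the lexicographic algorithm (Algorithm 1) applied to $G$ returns exactly $\{1,2,\dots,m\}$.
   Context: Vertices of $G$ are identified with the integers $1,\dots,n$ and ordered by the usual order. For a vertex $v$, $N(v)=\{v\}\cup\{w : vw\in E(G)\}$ is its closed neighbourhood. A set $C\subseteq V(G)$ is an identifying code if the sets $N(v)\cap C$, $v\in V(G)$, are all nonempty and pairwise distinct. $G$ is twin-free if $N(v)\neq N(w)$ for all distinct vertices $v,w$. The lexicographic algorithm (Algorithm 1): set $C_0=\emptyset$. For $j=1,2,\dots,n$ in turn: (i) if $N(j)\cap C_{j-1}=\emptyset$, set $C_j=C_{j-1}\cup\{\min N(j)\}$; (ii) otherwise, if there exists $k\in\{1,\dots,j-1\}$ with $N(k)\cap C_{j-1}=N(j)\cap C_{j-1}$, let $k$ be the least such index; if $N(j)\neq N(k)$ set $C_j=C_{j-1}\cup\{\min(N(j)\triangle N(k))\}$, while if $N(j)=N(k)$ the algorithm stops immediately and returns "failure"; (iii) otherwise set $C_j=C_{j-1}$. If the algorithm never fails, it returns $C_n$. Here $\triangle$ denotes symmetric difference. *)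

theory Defs
  imports Main
begin

definition simple_graph :: "nat \<Rightarrow> (nat \<Rightarrow> nat \<Rightarrow> bool) \<Rightarrow> bool" where
  "simple_graph n E \<longleftrightarrow> (\<forall>v w. E v w \<longrightarrow> E w v) \<and> (\<forall>v. \<not> E v v)
     \<and> (\<forall>v w. E v w \<longrightarrow> v \<in> {1..n} \<and> w \<in> {1..n})"

definition nbh :: "nat \<Rightarrow> (nat \<Rightarrow> nat \<Rightarrow> bool) \<Rightarrow> nat \<Rightarrow> nat set" where
  "nbh n E v = {v} \<union> {w \<in> {1..n}. E v w}"

definition twin_free :: "nat \<Rightarrow> (nat \<Rightarrow> nat \<Rightarrow> bool) \<Rightarrow> bool" where
  "twin_free n E \<longleftrightarrow> (\<forall>v\<in>{1..n}. \<forall>w\<in>{1..n}. v \<noteq> w \<longrightarrow> nbh n E v \<noteq> nbh n E w)"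

definition identifying_code :: "nat \<Rightarrow> (nat \<Rightarrow> nat \<Rightarrow> bool) \<Rightarrow> nat set \<Rightarrow> bool" where
  "identifying_code n E C \<longleftrightarrow> C \<subseteq> {1..n}
     \<and> (\<forall>v\<in>{1..n}. nbh n E v \<inter> C \<noteq> {})
     \<and> (\<forall>v\<in>{1..n}. \<forall>w\<in>{1..n}. v \<noteq> w \<longrightarrow> nbh n E v \<inter> C \<noteq> nbh n E w \<inter> C)"

definition minimal_identifying_code :: "nat \<Rightarrow> (nat \<Rightarrow> nat \<Rightarrow> bool) \<Rightarrow> nat set \<Rightarrow> bool" where
  "minimal_identifying_code n E C \<longleftrightarrow> identifying_code n E C
     \<and> (\<forall>D. D \<subset> C \<longrightarrow> \<not> identifying_code n E D)"

text \<open>One step j of Algorithm 1 on the current code; None means failure.\<close>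
definition lex_step :: "nat \<Rightarrow> (nat \<Rightarrow> nat \<Rightarrow> bool) \<Rightarrow> nat \<Rightarrow> nat set option \<Rightarrow> nat set option" where
  "lex_step n E j st = (case st of None \<Rightarrow> None | Some C \<Rightarrow>
     (if nbh n E j \<inter> C = {} then Some (C \<union> {Min (nbh n E j)})
      else if (\<exists>k\<in>{1..<j}. nbh n E k \<inter> C = nbh n E j \<inter> C) then
        (let k = (LEAST k. k \<in> {1..<j} \<and> nbh n E k \<inter> C = nbh n E j \<inter> C) in
          if nbh n E j \<noteq> nbh n E k
          then Some (C \<union> {Min ((nbh n E j - nbh n E k) \<union> (nbh n E k - nbh n E j))})
          else None)
      else Some C))"

fun lex_run :: "nat \<Rightarrow> (nat \<Rightarrow> nat \<Rightarrow> bool) \<Rightarrow> nat \<Rightarrow> nat set option" where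
  "lex_run n E 0 = Some {}"
| "lex_run n E (Suc j) = lex_step n E (Suc j) (lex_run n E j)"

definition lex_algorithm :: "nat \<Rightarrow> (nat \<Rightarrow> nat \<Rightarrow> bool) \<Rightarrow> nat set option" where
  "lex_algorithm n E = lex_run n E n"

end

theory Submission
  imports Defs
begin

lemma nbh_basic:
  assumes "simple_graph n E" "v \<in> {1..n}"
  shows "v \<in> nbh n E v" "nbh n E v \<subseteq> {1..n}" "finite (nbh n E v)"
  using assms unfolding nbh_def by auto

lemma mono_dist:
  assumes "A \<inter> C \<noteq> B \<inter> C" "C \<subseteq> C'"
  shows "A \<inter> C' \<noteq> B \<inter> C'"
proof
  assume "A \<inter> C' = B \<inter> C'"
  then have "A \<inter> C' \<inter> C = B \<inter> C' \<inter> C" by simp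
  with assms(2) have "A \<inter> C = B \<inter> C" by blast
  with assms(1) show False by simp
qed

lemma min_in_code:
  assumes "simple_graph n E" "S \<subseteq> {1..n}" "S \<inter> {1..m} \<noteq> {}"
  shows "Min S \<in> {1..m}" "Min S \<in> S"
proof -
  have fin: "finite S" using assms(2) finite_subset by blast
  obtain x where x: "x \<in> S" "x \<in> {1..m}" using assms(3) by blast
  have "Min S \<le> x" using fin x by simp
  moreover have "Min S \<in> S" using fin x Min_in by blast
  ultimately show "Min S \<in> {1..m}" "Min S \<in> S" using x assms(2) by auto
qed

definition inv where
  "inv n E m j C \<longleftrightarrow> C \<subseteq> {1..m} \<and> (\<forall>v\<in>{1..j}. nbh n E v \<inter> C \<noteq> {})
     \<and> (\<forall>v\<in>{1..j}. \<forall>w\<in>{1..j}. v \<noteq> w \<longrightarrow> nbh n E v \<inter> C \<noteq> nbh n E w \<inter> C)"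

lemma run_inv:
  assumes sg: "simple_graph n E"
    and tf: "twin_free n E"
    and mn: "m \<le> n"
    and ic: "identifying_code n E {1..m}"
  shows "j \<le> n \<Longrightarrow> \<exists>C. lex_run n E j = Some C \<and> inv n E m j C"
proof (induction j)
  case 0
  then show ?case by (simp add: inv_def)
next
  case (Suc i)
  let ?N = "nbh n E"
  let ?j = "Suc i"
  from Suc obtain C where C: "lex_run n E i = Some C" "inv n E m i C" by auto
  have jr: "?j \<in> {1..n}" using Suc.prems by simp
  have Cm: "C \<subseteq> {1..m}" and ne: "\<forall>v\<in>{1..i}. ?N v \<inter> C \<noteq> {}"
    and di: "\<forall>v\<in>{1..i}. \<forall>w\<in>{1..i}. v \<noteq> w \<longrightarrow> ?N v \<inter> C \<noteq> ?N w \<inter> C"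
    using C(2) unfolding inv_def by auto
  have icne: "\<forall>v\<in>{1..n}. ?N v \<inter> {1..m} \<noteq> {}"
    and icdi: "\<forall>v\<in>{1..n}. \<forall>w\<in>{1..n}. v \<noteq> w \<longrightarrow> ?N v \<inter> {1..m} \<noteq> ?N w \<inter> {1..m}"
    using ic unfolding identifying_code_def by auto
  have run: "lex_run n E ?j = lex_step n E ?j (Some C)" using C(1) by simp
  have lt: "{1..?j} = insert ?j {1..i}" by auto
  show ?case
  proof (cases "?N ?j \<inter> C = {}")
    case True
    let ?x = "Min (?N ?j)"
    have x: "?x \<in> {1..m}" "?x \<in> ?N ?j"
    proof -
      have "?N ?j \<inter> {1..m} \<noteq> {}" using icne jr by blast
      from min_in_code[OF sg nbh_basic(2)[OF sg jr] this] show "?x \<in> {1..m}" "?x \<in> ?N ?j" .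
    qed
    let ?C' = "C \<union> {?x}"
    have "lex_step n E ?j (Some C) = Some ?C'" using True by (simp add: lex_step_def)
    moreover have "inv n E m ?j ?C'"
      unfolding inv_def lt
    proof (intro conjI ballI impI)
      show "?C' \<subseteq> {1..m}" using Cm x by auto
    next
      fix v assume "v \<in> insert ?j {1..i}"
      then show "?N v \<inter> ?C' \<noteq> {}" using x ne by auto
    next
      fix v w assume v: "v \<in> insert ?j {1..i}" and w: "w \<in> insert ?j {1..i}" and vw: "v \<noteq> w"
      have "?N v \<inter> C \<noteq> ?N w \<inter> C"
        using v w vw di ne True by auto
      then show "?N v \<inter> ?C' \<noteq> ?N w \<inter> ?C'" by (rule mono_dist) auto
    qed
    ultimately show ?thesis using run by auto
  next
    case False
    note F = False
    show ?thesis
    proof (cases "\<exists>k\<in>{1..<?j}. ?N k \<inter> C = ?N ?j \<inter> C")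
      case True
      define k where "k = (LEAST k. k \<in> {1..<?j} \<and> ?N k \<inter> C = ?N ?j \<inter> C)"
      have k: "k \<in> {1..<?j}" "?N k \<inter> C = ?N ?j \<inter> C"
      proof -
        have "\<exists>k. k \<in> {1..<?j} \<and> ?N k \<inter> C = ?N ?j \<inter> C" using True by blast
        from LeastI_ex[OF this] show "k \<in> {1..<?j}" "?N k \<inter> C = ?N ?j \<inter> C"
          unfolding k_def by blast+
      qed
      have kr: "k \<in> {1..n}" using k Suc.prems by auto
      have Nne: "?N ?j \<noteq> ?N k" using tf jr kr k(1) unfolding twin_free_def by auto
      let ?S = "(?N ?j - ?N k) \<union> (?N k - ?N ?j)"
      let ?x = "Min ?S"
      have Ssub: "?S \<subseteq> {1..n}" using nbh_basic(2)[OF sg jr] nbh_basic(2)[OF sg kr] by auto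
      have "?N ?j \<inter> {1..m} \<noteq> ?N k \<inter> {1..m}" using icdi jr kr k(1) by auto
      then have "?S \<inter> {1..m} \<noteq> {}" by blast
      then have x: "?x \<in> {1..m}" "?x \<in> ?S" using min_in_code[OF sg Ssub] by auto
      let ?C' = "C \<union> {?x}"
      have "lex_step n E ?j (Some C) = Some ?C'"
        using F True Nne by (simp add: lex_step_def k_def Let_def)
      moreover have "inv n E m ?j ?C'"
        unfolding inv_def lt
      proof (intro conjI ballI impI)
        show "?C' \<subseteq> {1..m}" using Cm x by auto
      next
        fix v assume "v \<in> insert ?j {1..i}"
        then show "?N v \<inter> ?C' \<noteq> {}" using F ne by auto
      next
        have key: "?N v \<inter> ?C' \<noteq> ?N ?j \<inter> ?C'" if v: "v \<in> {1..i}" for v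
        proof (cases "v = k")
          case True
          then show ?thesis using x(2) by blast
        next
          case False
          have "k \<in> {1..i}" using k(1) by auto
          then have "?N v \<inter> C \<noteq> ?N k \<inter> C" using di v False by blast
          then have "?N v \<inter> C \<noteq> ?N ?j \<inter> C" using k(2) by simp
          then show ?thesis by (rule mono_dist) auto
        qed
        fix v w assume v: "v \<in> insert ?j {1..i}" and w: "w \<in> insert ?j {1..i}" and vw: "v \<noteq> w"
        show "?N v \<inter> ?C' \<noteq> ?N w \<inter> ?C'"
        proof (cases "v = ?j")
          case True
          then show ?thesis using key w vw by auto
        next
          case False
          show ?thesis
          proof (cases "w = ?j")
            case True
            then show ?thesis using key v False by auto
          next
            case False2: False
            have "?N v \<inter> C \<noteq> ?N w \<inter> C" using v w vw di False False2 by auto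
            then show ?thesis by (rule mono_dist) auto
          qed
        qed
      qed
      ultimately show ?thesis using run by auto
    next
      case False
      have "lex_step n E ?j (Some C) = Some C" using F False by (simp add: lex_step_def)
      moreover have "inv n E m ?j C"
        unfolding inv_def lt
      proof (intro conjI ballI impI)
        show "C \<subseteq> {1..m}" using Cm by auto
      next
        fix v assume "v \<in> insert ?j {1..i}"
        then show "?N v \<inter> C \<noteq> {}" using F ne by auto
      next
        fix v w assume v: "v \<in> insert ?j {1..i}" and w: "w \<in> insert ?j {1..i}" and vw: "v \<noteq> w"
        show "?N v \<inter> C \<noteq> ?N w \<inter> C"
          using v w vw di False by (auto simp: less_Suc_eq_le)
      qed
      ultimately show ?thesis using run by auto
    qed
  qed
qed

theorem corollary1:
  fixes n m :: nat and E :: "nat \<Rightarrow> nat \<Rightarrow> bool"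
  assumes "simple_graph n E"
    and "twin_free n E"
    and "1 \<le> m" and "m \<le> n"
    and "minimal_identifying_code n E {1..m}"
  shows "lex_algorithm n E = Some {1..m}"
proof -
  have ic: "identifying_code n E {1..m}" and mi: "\<forall>D. D \<subset> {1..m} \<longrightarrow> \<not> identifying_code n E D"
    using assms(5) unfolding minimal_identifying_code_def by auto
  obtain C where C: "lex_run n E n = Some C" "inv n E m n C"
    using run_inv[OF assms(1,2,4) ic] by auto
  have "identifying_code n E C"
    using C(2) assms(4) unfolding inv_def identifying_code_def by auto
  moreover have "C \<subseteq> {1..m}" using C(2) unfolding inv_def by auto
  ultimately have "C = {1..m}" using mi by blast
  then show ?thesis using C(1) by (simp add: lex_algorithm_def)
qed

end
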